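(* Let $N\ge 1$, let $\lambda,\mu$ be parameters, and let $\psi(\xi)=\xi\log\xi-\xi$. For $y,z\in\mathbb{R}^N$ (indices modulo $N$) define $$\Lambda(y,z;\nu)=\sum_{k=1}^N\psi(z_k-y_k)-\sum_{k=1}^N\psi(\nu+y_{k+1}-z_k).$$ Let $x,\widetilde{x},\widehat{x},\widehat{\widetilde{x}}\in\mathbb{R}^N$ (indices modulo $N$, all arguments of $\psi$ below lying in its domain) satisfy for all $k$ the corner equations $$(E)\ (\widetilde{x}_k-x_k)(\lambda+x_k-\widetilde{x}_{k-1})=(\widehat{x}_k-x_k)(\mu+x_k-\widehat{x}_{k-1}),$$ $$(E_1)\ (\widetilde{x}_k-x_k)(\lambda+x_{k+1}-\widetilde{x}_k)=(\widehat{\widetilde{x}}_k-\widetilde{x}_k)(\mu+\widetilde{x}_k-\widehat{\widetilde{x}}_{k-1}),$$ $$(E_2)\ (\widehat{x}_k-x_k)(\mu+x_{k+1}-\widehat{x}_k)=(\widehat{\widetilde{x}}_k-\widehat{x}_k)(\lambda+\widehat{x}_k-\widehat{\widetilde{x}}_{k-1}),$$ $$(E_{12})\ (\widehat{\widetilde{x}}_k-\widehat{x}_k)(\lambda+\widehat{x}_{k+1}-\widehat{\widetilde{x}}_k)=(\widehat{\widetilde{x}}_k-\widetilde{x}_k)(\mu+\widetilde{x}_{k+1}-\widehat{\widetilde{x}}_k).$$ Then the discrete multi-time Lagrangian 1-form is closed on this solution: $$\Lambda(x,\widetilde{x};\lambda)+\Lambda(\widetilde{x},\widehat{\widetilde{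x}};\mu)-\Lambda(x,\widehat{x};\mu)-\Lambda(\widehat{x},\widehat{\widetilde{x}};\lambda)=0.$$
   Context: $\Lambda(\cdot,\cdot;\nu)$ is the generating function of the Bäcklund transformation $F_\nu$ of the periodic dual Toda lattice $\ddot x_k=\dot x_k(x_{k+1}-2x_k+x_{k-1})$ via $p=-\partial\Lambda/\partial x$, $\widetilde p=\partial\Lambda/\partial\widetilde x$; the corner equations are obtained by eliminating momenta. Only periodic boundary conditions are considered. *)

theory Defs
  imports Complex_Main
begin

text \<open>Vectors in R^N with indices modulo N are represented as N-periodic
functions int => real.\<close>

definition periodic :: "nat \<Rightarrow> (int \<Rightarrow> real) \<Rightarrow> bool" where
  "periodic N y \<longleftrightarrow> (\<forall>k. y (k + int N) = y k)"

definition psi :: "real \<Rightarrow> real" where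
  "psi \<xi> = \<xi> * ln \<xi> - \<xi>"

definition Lam :: "nat \<Rightarrow> (int \<Rightarrow> real) \<Rightarrow> (int \<Rightarrow> real) \<Rightarrow> real \<Rightarrow> real" where
  "Lam N y z \<nu> = (\<Sum>k=1..int N. psi (z k - y k)) - (\<Sum>k=1..int N. psi (\<nu> + y (k+1) - z k))"

definition Lam_dom :: "nat \<Rightarrow> (int \<Rightarrow> real) \<Rightarrow> (int \<Rightarrow> real) \<Rightarrow> real \<Rightarrow> bool" where
  "Lam_dom N y z \<nu> \<longleftrightarrow> (\<forall>k\<in>{1..int N}. z k - y k > 0 \<and> \<nu> + y (k+1) - z k > 0)"

end

theory Submission
  imports Defs
begin

lemma tele: "(\<Sum>k=1..int n. G (k+1) - G k) = G (int n + 1) - (G 1 :: real)"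
proof (induction n)
  case 0 then show ?case by simp
next
  case (Suc n)
  have "{1..int (Suc n)} = insert (int n + 1) {1..int n}" by auto
  then show ?case using Suc by simp
qed

lemma site:
  fixes lam mu X0 X1 Tm T0 Hm H0 Qm Q0 :: real
  assumes E: "(T0 - X0) * (lam + X0 - Tm) = (H0 - X0) * (mu + X0 - Hm)"
    and E1: "(T0 - X0) * (lam + X1 - T0) = (Q0 - T0) * (mu + T0 - Qm)"
    and E2: "(H0 - X0) * (mu + X1 - H0) = (Q0 - H0) * (lam + H0 - Qm)"
  shows "(T0 - X0) * ((lam + X1 - T0) + (mu + T0 - Qm)) *
     ((mu + X0 - Hm) * (lam - mu + H0 - T0) - (mu + T0 - Qm) * (lam - mu + Hm - Tm)) = 0"
  using E E1 E2 by algebra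

lemma site2:
  fixes lam mu xa xb ta tb ha hb qa A B C D E F G H La Lb Lbm Lc Ld Ldm Le Lf Lfm Lg Lh Lhm LDa LDb :: real
  assumes "A = ta - xa" "B = lam + xb - ta" "C = qa - ta" "D = mu + tb - qa"
    "E = ha - xa" "F = mu + xb - ha" "G = qa - ha" "H = lam + hb - qa"
    "La + Lbm = Le + Lfm" "La + Lb = Lc + Ldm" "Le + Lf = Lg + Lhm" "Lg + Lh = Lc + Ld"
    "Lb + LDb = Lh + LDa" "Lf + LDb = Ld + LDa"
  shows "(A*La - A) - (B*Lb - B) + (C*Lc - C) - (D*Ld - D) - (E*Le - E) + (F*Lf - F) - (G*Lg - G) + (H*Lh - H)
    = (- xb*(Lb - Lf) - tb*Ld + hb*Lh + tb - hb + (lam-mu)*LDb)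
     - (- xa*(Lbm - Lfm) - ta*Ldm + ha*Lhm + ta - ha + (lam-mu)*LDa)"
  using assms by algebra

lemma sum8:
  fixes fa fb fc fd fe ff fg fh :: "int \<Rightarrow> real"
  shows "(\<Sum>k\<in>I. fa k - fb k + fc k - fd k - fe k + ff k - fg k + fh k) =
    ((\<Sum>k\<in>I. fa k) - (\<Sum>k\<in>I. fb k)) + ((\<Sum>k\<in>I. fc k) - (\<Sum>k\<in>I. fd k))
    - ((\<Sum>k\<in>I. fe k) - (\<Sum>k\<in>I. ff k)) - ((\<Sum>k\<in>I. fg k) - (\<Sum>k\<in>I. fh k))"
  by (simp add: sum.distrib sum_subtractf)

lemma lnrel:
  fixes A B C D :: real
  assumes "A > 0" "B > 0" "C > 0" "D > 0" "A * B = C * D"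
  shows "ln A + ln B = ln C + ln D"
proof -
  have "ln (A * B) = ln (C * D)" using assms(5) by simp
  then show ?thesis using assms(1-4) by (simp add: ln_mult)
qed

lemma per_shift:
  assumes "periodic N y"
  shows "y (k + m * int N) = y k"
proof (induction m rule: int_induct[where k=0])
  case base then show ?case by simp
next
  case (step1 i)
  have "y (k + (i+1) * int N) = y ((k + i * int N) + int N)" by (simp add: algebra_simps)
  also have "\<dots> = y (k + i * int N)" using assms unfolding periodic_def by blast
  finally show ?case using step1 by simp
next
  case (step2 i)
  have "y (k + i * int N) = y ((k + (i - 1) * int N) + int N)" by (simp add: algebra_simps)
  also have "\<dots> = y (k + (i - 1) * int N)" using assms unfolding periodic_def by blast
  finally show ?case using step2 by simp
qed

lemma per_red:
  assumes "periodic N y" "N \<ge> 1"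
  shows "y (k + j) = y ((k-1) mod int N + 1 + j)"
proof -
  have "k + j = ((k-1) mod int N + 1 + j) + ((k-1) div int N) * int N"
    using mod_div_mult_eq[of "k-1" "int N"] by linarith
  then show ?thesis using per_shift[OF assms(1), of "(k-1) mod int N + 1 + j" "(k-1) div int N"] by simp
qed

lemma red_mem:
  assumes "N \<ge> 1" shows "(k-1) mod int N + 1 \<in> {1..int N}"
proof -
  have "int N > 0" using assms by simp
  then have "(k-1) mod int N < int N" "(k-1) mod int N \<ge> 0" by (rule pos_mod_bound, rule pos_mod_sign)
  then show ?thesis by simp
qed

theorem theorem5:
  fixes N :: nat and lam mu :: real and x xt xh xht :: "int \<Rightarrow> real"
  assumes N: "N \<ge> 1"
    and per: "periodic N x" "periodic N xt" "periodic N xh" "periodic N xht"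
    and dom: "Lam_dom N x xt lam" "Lam_dom N xt xht mu" "Lam_dom N x xh mu" "Lam_dom N xh xht lam"
    and E: "\<And>k. (xt k - x k) * (lam + x k - xt (k-1)) = (xh k - x k) * (mu + x k - xh (k-1))"
    and E1: "\<And>k. (xt k - x k) * (lam + x (k+1) - xt k) = (xht k - xt k) * (mu + xt k - xht (k-1))"
    and E2: "\<And>k. (xh k - x k) * (mu + x (k+1) - xh k) = (xht k - xh k) * (lam + xh k - xht (k-1))"
    and E12: "\<And>k. (xht k - xh k) * (lam + xh (k+1) - xht k) = (xht k - xt k) * (mu + xt (k+1) - xht k)"
  shows "Lam N x xt lam + Lam N xt xht mu - Lam N x xh mu - Lam N xh xht lam = 0"
proof -
  have red: "\<And>y k. periodic N y \<Longrightarrow> y k = y ((k-1) mod int N + 1) \<and> y (k+1) = y ((k-1) mod int N + 1 + 1)"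
    using per_red[OF _ N] by (metis add.right_neutral)
  have mem: "\<And>k. (k-1) mod int N + 1 \<in> {1..int N}" using red_mem[OF N] .
  have gen: "\<And>y z (P::real\<Rightarrow>real\<Rightarrow>real\<Rightarrow>bool) k. periodic N y \<Longrightarrow> periodic N z \<Longrightarrow>
      (\<forall>k\<in>{1..int N}. P (y k) (y (k+1)) (z k)) \<Longrightarrow> P (y k) (y (k+1)) (z k)"
  proof -
    fix y z and P :: "real\<Rightarrow>real\<Rightarrow>real\<Rightarrow>bool" and k
    assume py: "periodic N y" and pz: "periodic N z" and H: "\<forall>k\<in>{1..int N}. P (y k) (y (k+1)) (z k)"
    define r where "r = (k-1) mod int N + 1"
    have "P (y r) (y (r+1)) (z r)" using H mem[of k] unfolding r_def by blast
    moreover have "y k = y r" "y (k+1) = y (r+1)" "z k = z r"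
      using red[OF py, of k] red[OF pz, of k] unfolding r_def by auto
    ultimately show "P (y k) (y (k+1)) (z k)" by simp
  qed
  have pab: "xt k - x k > 0 \<and> lam + x (k+1) - xt k > 0" for k
    using gen[OF per(1) per(2), of "\<lambda>u v w. w - u > 0 \<and> lam + v - w > 0" k] dom(1) unfolding Lam_dom_def by simp
  have pcd: "xht k - xt k > 0 \<and> mu + xt (k+1) - xht k > 0" for k
    using gen[OF per(2) per(4), of "\<lambda>u v w. w - u > 0 \<and> mu + v - w > 0" k] dom(2) unfolding Lam_dom_def by simp
  have pef: "xh k - x k > 0 \<and> mu + x (k+1) - xh k > 0" for k
    using gen[OF per(1) per(3), of "\<lambda>u v w. w - u > 0 \<and> mu + v - w > 0" k] dom(3) unfolding Lam_dom_def by simp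
  have pgh: "xht k - xh k > 0 \<and> lam + xh (k+1) - xht k > 0" for k
    using gen[OF per(3) per(4), of "\<lambda>u v w. w - u > 0 \<and> lam + v - w > 0" k] dom(4) unfolding Lam_dom_def by simp
  define D where "D = (\<lambda>k. lam - mu + xh k - xt k)"
  have W: "(mu + x (k+1) - xh k) * D (k+1) = (mu + xt (k+1) - xht k) * D k" for k
  proof -
    have "(xt (k+1) - x (k+1)) * ((lam + x (k+1+1) - xt (k+1)) + (mu + xt (k+1) - xht k)) *
     ((mu + x (k+1) - xh k) * (lam - mu + xh (k+1) - xt (k+1)) - (mu + xt (k+1) - xht k) * (lam - mu + xh k - xt k)) = 0"
      using site[OF E[of "k+1"] E1[of "k+1"] E2[of "k+1"]] by simp
    moreover have "(xt (k+1) - x (k+1)) * ((lam + x (k+1+1) - xt (k+1)) + (mu + xt (k+1) - xht k)) \<noteq> 0"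
      using pab[of "k+1"] pcd[of k] by (smt (verit) mult_pos_pos)
    ultimately show ?thesis unfolding D_def by simp
  qed
  have Wb: "(lam + x (k+1) - xt k) * D (k+1) = (lam + xh (k+1) - xht k) * D k" for k
    using W[of k] unfolding D_def by algebra
  have zero_prop: "D (j+1) = 0 \<and> D (j-1) = 0" if "D j = 0" for j
  proof
    show "D (j+1) = 0" using W[of j] that pef[of j] by simp
    have "(mu + x j - xh (j-1)) * D j = (mu + xt j - xht (j-1)) * D (j-1)"
      using W[of "j-1"] by simp
    moreover have "mu + xt j - xht (j-1) > 0" using pcd[of "j-1"] by simp
    ultimately show "D (j-1) = 0" using that by simp
  qed
  have allz: "D k = 0" if "D j = 0" for j k
  proof -
    have H: "D (j + int n) = 0 \<and> D (j - int n) = 0" for n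
    proof (induction n)
      case 0 then show ?case using that by simp
    next
      case (Suc n)
      have "D (j + int n + 1) = 0" using zero_prop[of "j + int n"] Suc by simp
      moreover have "D (j - int n - 1) = 0" using zero_prop[of "j - int n"] Suc by simp
      ultimately show ?case by (simp add: algebra_simps)
    qed
    show ?thesis
    proof (cases "k \<ge> j")
      case True
      then have "k = j + int (nat (k - j))" by simp
      then show ?thesis using H[of "nat (k-j)"] by metis
    next
      case False
      then have "k = j - int (nat (j - k))" by simp
      then show ?thesis using H[of "nat (j-k)"] by metis
    qed
  qed
  show ?thesis
  proof (cases "\<exists>j. D j = 0")
    case True
    then obtain j where j: "D j = 0" by blast
    have Dz: "xh k = xt k + mu - lam" for k using allz[OF j, of k] unfolding D_def by simp
    have "(xt 1 - x 1) * (lam + x 1 - xt 0) = (xt 1 + mu - lam - x 1) * (mu + x 1 - (xt 0 + mu - lam))"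
      using E[of 1] by (simp add: Dz)
    then have "(mu - lam) * (lam + x 1 - xt 0) = 0" by algebra
    moreover have "lam + x 1 - xt 0 > 0" using pab[of 0] by simp
    ultimately have lm: "lam = mu" by simp
    have "xh = xt" using Dz lm by (simp add: fun_eq_iff)
    then show ?thesis using lm by simp
  next
    case False
    then have Dnz: "D k \<noteq> 0" for k by blast
    define G where "G = (\<lambda>k. - x k * (ln (lam + x k - xt (k-1)) - ln (mu + x k - xh (k-1)))
       - xt k * ln (mu + xt k - xht (k-1)) + xh k * ln (lam + xh k - xht (k-1)) + xt k - xh k
       + (lam - mu) * ln \<bar>D k\<bar>)"
    have site_eq: "psi (xt k - x k) - psi (lam + x (k+1) - xt k) + psi (xht k - xt k)
        - psi (mu + xt (k+1) - xht k) - psi (xh k - x k) + psi (mu + x (k+1) - xh k)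
        - psi (xht k - xh k) + psi (lam + xh (k+1) - xht k) = G (k+1) - G k" for k
    proof -
      have L1: "ln (xt k - x k) + ln (lam + x k - xt (k-1)) = ln (xh k - x k) + ln (mu + x k - xh (k-1))"
        apply (rule lnrel) using E[of k] pab[of k] pab[of "k-1"] pef[of k] pef[of "k-1"] by simp_all
      have L2: "ln (xt k - x k) + ln (lam + x (k+1) - xt k) = ln (xht k - xt k) + ln (mu + xt k - xht (k-1))"
        apply (rule lnrel) using E1[of k] pab[of k] pcd[of k] pcd[of "k-1"] by simp_all
      have L3: "ln (xh k - x k) + ln (mu + x (k+1) - xh k) = ln (xht k - xh k) + ln (lam + xh k - xht (k-1))"
        apply (rule lnrel) using E2[of k] pef[of k] pgh[of k] pgh[of "k-1"] by simp_all
      have L4: "ln (xht k - xh k) + ln (lam + xh (k+1) - xht k) = ln (xht k - xt k) + ln (mu + xt (k+1) - xht k)"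
        apply (rule lnrel) using E12[of k] pgh[of k] pcd[of k] by simp_all
      have L5: "ln (lam + x (k+1) - xt k) + ln \<bar>D (k+1)\<bar> = ln (lam + xh (k+1) - xht k) + ln \<bar>D k\<bar>"
      proof (rule lnrel)
        have "\<bar>(lam + x (k+1) - xt k) * D (k+1)\<bar> = \<bar>(lam + xh (k+1) - xht k) * D k\<bar>" using Wb[of k] by simp
        then show "(lam + x (k+1) - xt k) * \<bar>D (k+1)\<bar> = (lam + xh (k+1) - xht k) * \<bar>D k\<bar>" using pab[of k] pgh[of k] by (simp add: abs_mult)
      qed (use pab[of k] pgh[of k] Dnz[of k] Dnz[of "k+1"] in auto)
      have L6: "ln (mu + x (k+1) - xh k) + ln \<bar>D (k+1)\<bar> = ln (mu + xt (k+1) - xht k) + ln \<bar>D k\<bar>"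
      proof (rule lnrel)
        have "\<bar>(mu + x (k+1) - xh k) * D (k+1)\<bar> = \<bar>(mu + xt (k+1) - xht k) * D k\<bar>" using W[of k] by simp
        then show "(mu + x (k+1) - xh k) * \<bar>D (k+1)\<bar> = (mu + xt (k+1) - xht k) * \<bar>D k\<bar>" using pef[of k] pcd[of k] by (simp add: abs_mult)
      qed (use pef[of k] pcd[of k] Dnz[of k] Dnz[of "k+1"] in auto)
      have G1: "G (k+1) = - x (k+1) * (ln (lam + x (k+1) - xt k) - ln (mu + x (k+1) - xh k))
       - xt (k+1) * ln (mu + xt (k+1) - xht k) + xh (k+1) * ln (lam + xh (k+1) - xht k) + xt (k+1) - xh (k+1)
       + (lam - mu) * ln \<bar>D (k+1)\<bar>" unfolding G_def by simp
      note S = site2[where xa="x k" and xb="x (k+1)" and ta="xt k" and tb="xt (k+1)" and ha="xh k"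
          and hb="xh (k+1)" and qa="xht k" and lam=lam and mu=mu
          and A="xt k - x k" and B="lam + x (k+1) - xt k" and C="xht k - xt k" and D="mu + xt (k+1) - xht k"
          and E="xh k - x k" and F="mu + x (k+1) - xh k" and G="xht k - xh k" and H="lam + xh (k+1) - xht k",
          OF refl refl refl refl refl refl refl refl L1 L2 L3 L4 L5 L6]
      show ?thesis unfolding G1 unfolding psi_def G_def using S by simp
    qed
    have "Lam N x xt lam + Lam N xt xht mu - Lam N x xh mu - Lam N xh xht lam =
      (\<Sum>k=1..int N. psi (xt k - x k) - psi (lam + x (k+1) - xt k) + psi (xht k - xt k)
        - psi (mu + xt (k+1) - xht k) - psi (xh k - x k) + psi (mu + x (k+1) - xh k)
        - psi (xht k - xh k) + psi (lam + xh (k+1) - xht k))"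
      unfolding Lam_def by (rule sum8[symmetric])
    also have "\<dots> = (\<Sum>k=1..int N. G (k+1) - G k)" by (rule sum.cong[OF refl site_eq])
    also have "\<dots> = G (int N + 1) - G 1" by (rule tele[of G N])
    also have "\<dots> = 0"
    proof -
      have p: "y (k + int N) = y k" if "periodic N y" for y k using that unfolding periodic_def by blast
      have e1: "1 + int N - 1 = 0 + int N" by simp
      have e0: "(1::int) - 1 = 0" by simp
      have "G (int N + 1) = G (1 + int N)" by (simp only: add.commute)
      moreover have "G (1 + int N) = G 1"
        unfolding G_def D_def
        by (simp only: e1 e0 p[OF per(1)] p[OF per(2)] p[OF per(3)] p[OF per(4)])
      ultimately show ?thesis by simp
    qed
    finally show ?thesis .
  qed
qed

end
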